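(* Given the power cost $P\geq 0$, the MMSE estimation cost for the ZEC coding scheme is \[ S_{\mathsf{ZEC}}(P) = 0, \quad \text{for } P\geq P^*, \] where \[ P^* = \min\{ P: \mathcal{A}^0(P) \neq\varnothing\}. \]
   Context: Setting: causal-encoding, noncausal-decoding vector-valued Witsenhausen counterexample with i.i.d. source $X_0\sim\mathcal{N}(0,Q)$ and channel noise $Z_1\sim\mathcal{N}(0,N)$, $Q,N>0$; state $X_1=X_0+U_1$, channel output $Y_1=X_1+Z_1$; power cost $P=\mathbb{E}[U_1^2]$, estimation cost $S=\mathbb{E}[(X_1-U_2)^2]$. By the single-letter coordination-coding characterization, a cost pair $(P,S)$ is achievable if there are auxiliary random variables $W_1$ (independent of $X_0$) and $W_2$ (depending on $(X_0,W_1)$), both made available to the noncausal decoder, satisfying $I(W_1,W_2;Y_1)-I(W_2;X_0|W_1)\geq 0$, with the decoder using the MMSE estimate $U_2=\mathbb{E}[X_1\mid W_1,W_2,Y_1]$. The ZEC scheme, for parameters $V_1\geq 0$, $a\geq 0$: $W_1\sim\mathcal{N}(0,V_1)$ independent of $X_0$; $W_2=a\cdot\mathrm{sign}(X_0)$; $U_1=W_1+a\cdot\mathrm{sign}(X_0)-X_0$; hence $X_1=W_1+W_2$ and $Y_1=W_1+W_2+Z_1$. Its power cost is $P=V_1+Q+a^2-2a\sqrt{2Q/\pi}$, and the information constraint becomes $h(Y_1)-\tfrac12\log_2(2\pi e N)-1\geq 0$ (in bits). The admissible parameter set is \[ \mathcal{A}^0(P) = \Big\{a\geq 0:\ h(Y_1)-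 \tfrac{1}{2}\log_2(2\pi eN) \geq 1,\ \text{and } V_1 = P - \Big(Q + a^2 - 2a\sqrt{\tfrac{2Q}{\pi}}\Big)\geq 0 \Big\}, \] where $h(Y_1)$ is the differential entropy (in bits) of the Gaussian mixture density \[ f_{Y_1}(y)= \frac{1}{2\sqrt{V_1+N}}\Big[\phi\Big(\tfrac{y-a}{\sqrt{V_1+N}}\Big)+\phi\Big(\tfrac{y+a}{\sqrt{V_1+N}}\Big)\Big], \] with $\phi(x)=\frac{1}{\sqrt{2\pi}}e^{-x^2/2}$ the standard Gaussian density. *)

theory Defs
  imports "HOL-Probability.Probability"
begin

definition phi :: "real \<Rightarrow> real" where
  "phi x = 1 / sqrt (2 * pi) * exp (- x\<^sup>2 / 2)"

text \<open>Density of Y1 = W1 + a sign(X0) + Z1 (Gaussian mixture), with variance V1 of W1 and N of Z1.\<close>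
definition fY :: "real \<Rightarrow> real \<Rightarrow> real \<Rightarrow> real \<Rightarrow> real" where
  "fY N V1 a y = 1 / (2 * sqrt (V1 + N)) *
     (phi ((y - a) / sqrt (V1 + N)) + phi ((y + a) / sqrt (V1 + N)))"

definition hY :: "real \<Rightarrow> real \<Rightarrow> real \<Rightarrow> real" where
  "hY N V1 a = - (LINT y|lborel. fY N V1 a y * log 2 (fY N V1 a y))"

text \<open>Variance of W1 determined by the power constraint P = V1 + Q + a^2 - 2a sqrt(2Q/pi).\<close>
definition V1_of :: "real \<Rightarrow> real \<Rightarrow> real \<Rightarrow> real" where
  "V1_of Q P a = P - (Q + a\<^sup>2 - 2 * a * sqrt (2 * Q / pi))"

definition A0 :: "real \<Rightarrow> real \<Rightarrow> real \<Rightarrow> real set" where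
  "A0 Q N P = {a. a \<ge> 0 \<and>
      hY N (V1_of Q P a) a - 1/2 * log 2 (2 * pi * exp 1 * N) \<ge> 1 \<and>
      V1_of Q P a \<ge> 0}"

text \<open>Underlying probability space: three independent standard Gaussians G0, G1, G2,
  realised as the product measure on ((real \<times> real) \<times> real).\<close>
definition std_gauss :: "real measure" where
  "std_gauss = density lborel std_normal_density"

definition Omega :: "((real \<times> real) \<times> real) measure" where
  "Omega = (std_gauss \<Otimes>\<^sub>M std_gauss) \<Otimes>\<^sub>M std_gauss"

definition X0v :: "real \<Rightarrow> (real \<times> real) \<times> real \<Rightarrow> real" where
  "X0v Q \<omega> = sqrt Q * fst (fst \<omega>)"
definition W1v :: "real \<Rightarrow> (real \<times> real) \<times> real \<Rightarrow> real" where
  "W1v V1 \<omega> = sqrt V1 * snd (fst \<omega>)"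
definition Z1v :: "real \<Rightarrow> (real \<times> real) \<times> real \<Rightarrow> real" where
  "Z1v N \<omega> = sqrt N * snd \<omega>"
definition W2v :: "real \<Rightarrow> real \<Rightarrow> (real \<times> real) \<times> real \<Rightarrow> real" where
  "W2v Q a \<omega> = a * sgn (X0v Q \<omega>)"
definition U1v :: "real \<Rightarrow> real \<Rightarrow> real \<Rightarrow> (real \<times> real) \<times> real \<Rightarrow> real" where
  "U1v Q V1 a \<omega> = W1v V1 \<omega> + a * sgn (X0v Q \<omega>) - X0v Q \<omega>"
definition X1v :: "real \<Rightarrow> real \<Rightarrow> real \<Rightarrow> (real \<times> real) \<times> real \<Rightarrow> real" where
  "X1v Q V1 a \<omega> = X0v Q \<omega> + U1v Q V1 a \<omega>"
definition Y1v :: "real \<Rightarrow> real \<Rightarrow> real \<Rightarrow> real \<Rightarrow> (real \<times> real) \<times> real \<Rightarrow> real" where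
  "Y1v Q N V1 a \<omega> = X1v Q V1 a \<omega> + Z1v N \<omega>"

definition dec_sigma :: "real \<Rightarrow> real \<Rightarrow> real \<Rightarrow> real \<Rightarrow> ((real \<times> real) \<times> real) measure" where
  "dec_sigma Q N V1 a = vimage_algebra (space Omega)
     (\<lambda>\<omega>. (W1v V1 \<omega>, W2v Q a \<omega>, Y1v Q N V1 a \<omega>)) borel"

definition U2v :: "real \<Rightarrow> real \<Rightarrow> real \<Rightarrow> real \<Rightarrow> (real \<times> real) \<times> real \<Rightarrow> real" where
  "U2v Q N V1 a = real_cond_exp Omega (dec_sigma Q N V1 a) (X1v Q V1 a)"

definition est_cost :: "real \<Rightarrow> real \<Rightarrow> real \<Rightarrow> real \<Rightarrow> real" where
  "est_cost Q N V1 a = (LINT \<omega>|Omega. (X1v Q V1 a \<omega> - U2v Q N V1 a \<omega>)\<^sup>2)"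

definition S_ZEC :: "real \<Rightarrow> real \<Rightarrow> real \<Rightarrow> real" where
  "S_ZEC Q N P = (INF a \<in> A0 Q N P. est_cost Q N (V1_of Q P a) a)"

definition P_star :: "real \<Rightarrow> real \<Rightarrow> real" where
  "P_star Q N = Inf {P. A0 Q N P \<noteq> {}}"

end

theory Submission
  imports Defs
begin


lemma std_gauss_prob: "prob_space std_gauss"
  unfolding std_gauss_def using prob_space_normal_density[of 1 0] by simp

lemma Omega_prob: "prob_space Omega"
  unfolding Omega_def using std_gauss_prob by (intro prob_space_pair) auto

lemma space_Omega: "space Omega = UNIV"
  by (simp add: Omega_def std_gauss_def space_pair_measure)

lemma sets_std_gauss[measurable_cong]: "sets std_gauss = sets borel"
  by (simp add: std_gauss_def)

lemma integrable_std_gauss_id: "integrable std_gauss (\<lambda>x. x)"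
  unfolding std_gauss_def
  using integrable_std_normal_moment[of 1]
  by (subst integrable_density) auto

lemma integrable_pair_fst:
  fixes f :: "'a \<Rightarrow> real"
  assumes "prob_space M1" "prob_space M2" "integrable M1 f"
  shows "integrable (M1 \<Otimes>\<^sub>M M2) (\<lambda>x. f (fst x))"
proof -
  have m: "f \<in> borel_measurable M1" using assms(3) by auto
  have "distr (M1 \<Otimes>\<^sub>M M2) M1 fst = M1"
    by (rule prob_space.distr_pair_fst[OF assms(2)])
  then show ?thesis
    using integrable_distr_eq[of fst "M1 \<Otimes>\<^sub>M M2" M1 f] m assms(3) by simp
qed

lemma integrable_pair_snd:
  fixes f :: "'a \<Rightarrow> real"
  assumes "prob_space M1" "prob_space M2" "integrable M2 f"
  shows "integrable (M1 \<Otimes>\<^sub>M M2) (\<lambda>x. f (snd x))"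
proof -
  interpret p: pair_sigma_finite M1 M2
    using assms by (simp add: pair_sigma_finite.intro prob_space_imp_sigma_finite)
  have "integrable (M2 \<Otimes>\<^sub>M M1) (\<lambda>x. f (fst x))"
    using integrable_pair_fst[OF assms(2,1,3)] .
  then have "integrable (M2 \<Otimes>\<^sub>M M1) (\<lambda>(x,y). (\<lambda>z. f (snd z)) (y,x))"
    by (simp add: case_prod_unfold)
  then show ?thesis using p.integrable_product_swap_iff by blast
qed

lemma integrable_X1: "integrable Omega (X1v Q V1 a)"
proof -
  have eq: "X1v Q V1 a = (\<lambda>\<omega>. sqrt V1 * snd (fst \<omega>) + a * sgn (sqrt Q * fst (fst \<omega>)))"
    by (auto simp: X1v_def U1v_def W1v_def X0v_def)
  have i1: "integrable (std_gauss \<Otimes>\<^sub>M std_gauss) (\<lambda>x. snd x)"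
    using integrable_pair_snd[OF std_gauss_prob std_gauss_prob integrable_std_gauss_id] .
  have i2: "integrable Omega (\<lambda>\<omega>. snd (fst \<omega>))"
    unfolding Omega_def
    using integrable_pair_fst[OF prob_space_pair[OF std_gauss_prob std_gauss_prob] std_gauss_prob i1] .
  interpret O: prob_space Omega by (rule Omega_prob)
  have m: "(\<lambda>\<omega>. a * sgn (sqrt Q * fst (fst \<omega>))) \<in> borel_measurable Omega"
    unfolding Omega_def by measurable
  have i3: "integrable Omega (\<lambda>\<omega>. a * sgn (sqrt Q * fst (fst \<omega>)))"
    apply (rule O.integrable_const_bound[where B="\<bar>a\<bar>"])
     apply (simp add: abs_mult sgn_real_def)
    apply (rule m)
    done
  show ?thesis unfolding eq using i2 i3 by auto
qed

lemma est_cost_zero: "est_cost Q N V1 a = 0"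
proof -
  interpret O: prob_space Omega by (rule Omega_prob)
  let ?g = "\<lambda>\<omega>. (W1v V1 \<omega>, W2v Q a \<omega>, Y1v Q N V1 a \<omega>)"
  have gm: "?g \<in> Omega \<rightarrow>\<^sub>M borel"
    unfolding Omega_def W1v_def W2v_def Y1v_def X1v_def U1v_def X0v_def Z1v_def by measurable
  have sub: "subalgebra Omega (dec_sigma Q N V1 a)"
    unfolding subalgebra_def dec_sigma_def
  proof
    show "space (vimage_algebra (space Omega) ?g borel) = space Omega" by simp
    show "sets (vimage_algebra (space Omega) ?g borel) \<subseteq> sets Omega"
      using gm by (rule measurable_iff_sets[THEN iffD1, THEN conjunct2] | simp add: sets_vimage_algebra2 measurable_def, blast)
  qed
  interpret F: finite_measure_subalgebra Omega "dec_sigma Q N V1 a"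
    by unfold_locales (rule sub)
  have X1m: "X1v Q V1 a \<in> borel_measurable (dec_sigma Q N V1 a)"
  proof -
    have "(\<lambda>\<omega>. fst (?g \<omega>) + fst (snd (?g \<omega>))) \<in> borel_measurable (dec_sigma Q N V1 a)"
      unfolding dec_sigma_def
      by (rule measurable_compose[OF measurable_vimage_algebra1]) (simp, rule borel_measurable_continuous_onI, intro continuous_intros)
    moreover have "(\<lambda>\<omega>. fst (?g \<omega>) + fst (snd (?g \<omega>))) = X1v Q V1 a"
      by (auto simp: X1v_def U1v_def W2v_def)
    ultimately show ?thesis by simp
  qed
  have ae: "AE \<omega> in Omega. U2v Q N V1 a \<omega> = X1v Q V1 a \<omega>"
    unfolding U2v_def using F.real_cond_exp_F_meas[OF integrable_X1 X1m] .
  have "est_cost Q N V1 a = (LINT \<omega>|Omega. 0)"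
    unfolding est_cost_def
  proof (rule integral_cong_AE)
    have m1: "X1v Q V1 a \<in> borel_measurable Omega"
      using integrable_X1 by (rule borel_measurable_integrable)
    have m2: "U2v Q N V1 a \<in> borel_measurable Omega"
      unfolding U2v_def by (rule borel_measurable_cond_exp2)
    show "(\<lambda>\<omega>. (X1v Q V1 a \<omega> - U2v Q N V1 a \<omega>)\<^sup>2) \<in> borel_measurable Omega"
      using m1 m2 by measurable
    show "AE \<omega> in Omega. (X1v Q V1 a \<omega> - U2v Q N V1 a \<omega>)\<^sup>2 = 0"
      using ae by eventually_elim simp
  qed simp
  then show ?thesis by simp
qed



definition gm :: "real \<Rightarrow> real \<Rightarrow> real" where
  "gm m y = (phi (y - m) + phi (y + m)) / 2"

definition C0 :: real where "C0 = ln 2 + ln (sqrt (2 * pi))"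

definition Bd :: "real \<Rightarrow> real \<Rightarrow> real" where
  "Bd M y = exp (M\<^sup>2 / 2) * exp (- y\<^sup>2 / 4) * (C0 + y\<^sup>2 + M\<^sup>2)"

lemma phi_nd: "phi (y - m) = normal_density m 1 y"
  by (simp add: phi_def normal_density_def)

lemma phi_pos: "0 < phi x"
  by (simp add: phi_def)

lemma sqrt2pi_ge1: "1 \<le> sqrt (2 * pi)"
  using pi_gt3 by simp

lemma phi_le_exp: "phi x \<le> exp (- x\<^sup>2 / 2)"
proof -
  have "1 / sqrt (2 * pi) \<le> 1" using sqrt2pi_ge1 by simp
  then show ?thesis unfolding phi_def
    using mult_right_mono[of "1 / sqrt (2 * pi)" 1 "exp (- x\<^sup>2 / 2)"] by simp
qed

lemma phi_le1: "phi x \<le> 1"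
proof -
  have "exp (- x\<^sup>2 / 2) \<le> 1" by simp
  then show ?thesis using phi_le_exp[of x] by linarith
qed

lemma ln_phi: "ln (phi x) = - ln (sqrt (2 * pi)) - x\<^sup>2 / 2"
  unfolding phi_def by (simp add: ln_mult ln_div)

lemma gm_pos: "0 < gm m y"
  unfolding gm_def using phi_pos[of "y - m"] phi_pos[of "y + m"] by simp

lemma gm_le1: "gm m y \<le> 1"
  unfolding gm_def using phi_le1[of "y - m"] phi_le1[of "y + m"] by simp

lemma phi_shift_bound:
  assumes "\<bar>m\<bar> \<le> M"
  shows "phi (y - m) \<le> exp (M\<^sup>2 / 2) * exp (- y\<^sup>2 / 4)"
proof -
  have "m\<^sup>2 \<le> M\<^sup>2" using power_mono[OF assms abs_ge_zero, of 2] by simp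
  moreover have "0 \<le> (y - 2 * m)\<^sup>2" by simp
  moreover have "- (y - m)\<^sup>2 / 2 = m\<^sup>2 / 2 - y\<^sup>2 / 4 - (y - 2 * m)\<^sup>2 / 4"
    by (simp add: power2_eq_square field_simps)
  ultimately have "- (y - m)\<^sup>2 / 2 \<le> M\<^sup>2 / 2 + - y\<^sup>2 / 4"
    by linarith
  then have "exp (- (y - m)\<^sup>2 / 2) \<le> exp (M\<^sup>2 / 2 + - y\<^sup>2 / 4)"
    by (simp only: exp_le_cancel_iff)
  also have "\<dots> = exp (M\<^sup>2 / 2) * exp (- y\<^sup>2 / 4)" by (rule exp_add)
  finally show ?thesis using phi_le_exp[of "y - m"] by linarith
qed

lemma gm_bound:
  assumes "\<bar>m\<bar> \<le> M"
  shows "gm m y \<le> exp (M\<^sup>2 / 2) * exp (- y\<^sup>2 / 4)"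
proof -
  have "\<bar>-m\<bar> \<le> M" using assms by simp
  from phi_shift_bound[OF assms, of y] phi_shift_bound[OF this, of y]
  show ?thesis unfolding gm_def by simp
qed

lemma neg_ln_gm_bound:
  assumes "\<bar>m\<bar> \<le> M"
  shows "- ln (gm m y) \<le> C0 + y\<^sup>2 + M\<^sup>2"
proof -
  have "phi (y - m) / 2 \<le> gm m y" unfolding gm_def using phi_pos[of "y + m"] by simp
  then have "ln (phi (y - m) / 2) \<le> ln (gm m y)"
    using phi_pos[of "y - m"] by simp
  moreover have "ln (phi (y - m) / 2) = - ln (sqrt (2 * pi)) - (y - m)\<^sup>2 / 2 - ln 2"
    using phi_pos[of "y - m"] by (simp add: ln_div ln_phi)
  moreover have "m\<^sup>2 \<le> M\<^sup>2" using power_mono[OF assms abs_ge_zero, of 2] by simp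
  moreover have "(y - m)\<^sup>2 / 2 \<le> y\<^sup>2 + m\<^sup>2"
    using zero_le_power2[of "y + m"] by (simp add: power2_eq_square algebra_simps)
  ultimately show ?thesis unfolding C0_def by linarith
qed

lemma C0_nonneg: "0 \<le> C0"
  unfolding C0_def using sqrt2pi_ge1 by simp

lemma glng_bound:
  assumes "\<bar>m\<bar> \<le> M"
  shows "\<bar>gm m y * ln (gm m y)\<bar> \<le> Bd M y"
proof -
  have g0: "0 < gm m y" by (rule gm_pos)
  have "ln (gm m y) \<le> 0" using gm_le1[of m y] g0 by simp
  then have "\<bar>gm m y * ln (gm m y)\<bar> = gm m y * (- ln (gm m y))"
    using g0 by (simp add: abs_mult)
  also have "\<dots> \<le> gm m y * (C0 + y\<^sup>2 + M\<^sup>2)"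
    using neg_ln_gm_bound[OF assms, of y] g0 by (intro mult_left_mono) auto
  also have "\<dots> \<le> exp (M\<^sup>2 / 2) * exp (- y\<^sup>2 / 4) * (C0 + y\<^sup>2 + M\<^sup>2)"
    using gm_bound[OF assms, of y] C0_nonneg by (intro mult_right_mono) auto
  finally show ?thesis unfolding Bd_def .
qed

lemma exp_quarter: "exp (- y\<^sup>2 / 4) = sqrt (4 * pi) * normal_density 0 (sqrt 2) y"
  by (simp add: normal_density_def real_sqrt_mult)

lemma Bd_integrable: "integrable lborel (Bd M)"
proof -
  have e: "Bd M = (\<lambda>y. (exp (M\<^sup>2 / 2) * (C0 + M\<^sup>2) * sqrt (4 * pi)) * normal_density 0 (sqrt 2) y
      + (exp (M\<^sup>2 / 2) * sqrt (4 * pi)) * (normal_density 0 (sqrt 2) y * (y - 0) ^ 2))"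
    by (rule ext) (unfold Bd_def exp_quarter, simp add: algebra_simps)
  show ?thesis unfolding e
    using integrable_normal_moment[of "sqrt 2" 0 2]
    by (intro Bochner_Integration.integrable_add integrable_mult_right) auto
qed

lemma gm_measurable[measurable]: "(\<lambda>y. gm m y) \<in> borel_measurable borel"
  unfolding gm_def phi_def by measurable

lemma glng_integrable: "integrable lborel (\<lambda>y. gm m y * ln (gm m y))"
proof (rule Bochner_Integration.integrable_bound[OF Bd_integrable[of "\<bar>m\<bar>"]])
  show "(\<lambda>y. gm m y * ln (gm m y)) \<in> borel_measurable lborel" by measurable
  show "AE y in lborel. norm (gm m y * ln (gm m y)) \<le> norm (Bd \<bar>m\<bar> y)"
    using glng_bound[of m "\<bar>m\<bar>"] by (auto intro: order_trans abs_ge_self)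
qed

lemma gm_integrable: "integrable lborel (gm m)"
  and gm_integral: "(LINT y|lborel. gm m y) = 1"
proof -
  have e: "gm m = (\<lambda>y. (normal_density m 1 y + normal_density (-m) 1 y) / 2)"
    by (rule ext) (simp add: gm_def phi_nd[symmetric])
  show "integrable lborel (gm m)" unfolding e by auto
  show "(LINT y|lborel. gm m y) = 1" unfolding e
    by (simp add: integral_divide_zero Bochner_Integration.integral_add)
qed

definition Hn :: "real \<Rightarrow> real" where
  "Hn m = (LINT y|lborel. gm m y * ln (gm m y))"

lemma gm_cont_m: "isCont (\<lambda>m. gm m y) a"
  unfolding gm_def phi_def by (intro continuous_intros) auto

lemma Hn_cont_interval: "continuous_on {-M..M} Hn"
proof (rule continuous_on_sequentiallyI)
  fix u a assume u: "\<forall>n. u n \<in> {-M..M}" and a: "a \<in> {-M..M}" and lim: "u \<longlonglongrightarrow> a"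
  show "(\<lambda>n. Hn (u n)) \<longlonglongrightarrow> Hn a"
    unfolding Hn_def
  proof (rule integral_dominated_convergence[where w="Bd M"])
    show "(\<lambda>y. gm a y * ln (gm a y)) \<in> borel_measurable lborel" by measurable
    show "\<And>n. (\<lambda>y. gm (u n) y * ln (gm (u n) y)) \<in> borel_measurable lborel" by measurable
    show "integrable lborel (Bd M)" by (rule Bd_integrable)
    show "AE y in lborel. (\<lambda>n. gm (u n) y * ln (gm (u n) y)) \<longlonglongrightarrow> gm a y * ln (gm a y)"
    proof (rule AE_I2)
      fix y
      have "(\<lambda>n. gm (u n) y) \<longlonglongrightarrow> gm a y"
        by (rule isCont_tendsto_compose[OF gm_cont_m lim])
      then show "(\<lambda>n. gm (u n) y * ln (gm (u n) y)) \<longlonglongrightarrow> gm a y * ln (gm a y)"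
        using gm_pos[of a y] by (intro tendsto_intros) auto
    qed
    show "AE y in lborel. norm (gm (u n) y * ln (gm (u n) y)) \<le> Bd M y" for n
    proof (rule AE_I2)
      fix y
      have "u n \<in> {-M..M}" using u by blast
      then have "\<bar>u n\<bar> \<le> M" by (simp add: abs_le_iff)
      then show "norm (gm (u n) y * ln (gm (u n) y)) \<le> Bd M y"
        unfolding real_norm_def by (rule glng_bound)
    qed
  qed
qed

lemma Hn_cont: "isCont Hn m"
proof -
  have "m \<in> interior {-(\<bar>m\<bar>+1)..\<bar>m\<bar>+1}" by auto
  then show ?thesis using continuous_on_interior[OF Hn_cont_interval] by blast
qed

lemma hY_scale:
  assumes "0 < V1 + N"
  shows "hY N V1 a = log 2 (sqrt (V1 + N)) - Hn (a / sqrt (V1 + N)) / ln 2"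
proof -
  define s where "s = sqrt (V1 + N)"
  define m where "m = a / s"
  have s0: "0 < s" using assms by (simp add: s_def)
  have fe: "fY N V1 a (s * x) = gm m x / s" for x
    unfolding fY_def gm_def m_def s_def[symmetric]
    using s0 by (simp add: field_simps)
  let ?F = "\<lambda>y. fY N V1 a y * log 2 (fY N V1 a y)"
  have "(LINT y|lborel. ?F y) = \<bar>s\<bar> *\<^sub>R (LINT x|lborel. ?F (0 + s * x))"
    using s0 by (intro lborel_integral_real_affine) simp
  also have "\<dots> = (LINT x|lborel. s * ((gm m x / s) * log 2 (gm m x / s)))"
    using s0 by (simp add: fe)
  also have "\<dots> = (LINT x|lborel. gm m x * ln (gm m x) / ln 2 - log 2 s * gm m x)"
  proof (rule Bochner_Integration.integral_cong[OF refl])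
    fix x
    have "log 2 (gm m x / s) = ln (gm m x) / ln 2 - log 2 s"
      using gm_pos[of m x] s0 by (simp add: log_def ln_div diff_divide_distrib)
    have "s * ((gm m x / s) * log 2 (gm m x / s)) = gm m x * log 2 (gm m x / s)"
      using s0 by simp
    also have "\<dots> = gm m x * ln (gm m x) / ln 2 - log 2 s * gm m x"
      unfolding \<open>log 2 (gm m x / s) = ln (gm m x) / ln 2 - log 2 s\<close> by (simp add: algebra_simps)
    finally show "s * ((gm m x / s) * log 2 (gm m x / s)) = gm m x * ln (gm m x) / ln 2 - log 2 s * gm m x" .
  qed
  also have "\<dots> = Hn m / ln 2 - log 2 s"
    using glng_integrable[of m] gm_integrable[of m]
    by (simp add: Bochner_Integration.integral_diff integral_divide_zero gm_integral Hn_def)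
  finally show ?thesis unfolding hY_def m_def s_def by simp
qed



definition cc :: "real \<Rightarrow> real" where "cc Q = sqrt (2 * Q / pi)"
definition pw :: "real \<Rightarrow> real \<Rightarrow> real \<Rightarrow> real" where
  "pw Q v a = v + Q + a\<^sup>2 - 2 * a * cc Q"
definition K0 :: "real \<Rightarrow> real" where "K0 N = 1 + 1/2 * log 2 (2 * pi * exp 1 * N)"

lemma V1_of_pw: "V1_of Q (pw Q v a) a = v"
  by (simp add: V1_of_def pw_def cc_def)

lemma pw_V1_of: "pw Q (V1_of Q P a) a = P"
  by (simp add: V1_of_def pw_def cc_def)

lemma A0_iff: "a \<in> A0 Q N P \<longleftrightarrow> a \<ge> 0 \<and> hY N (V1_of Q P a) a \<ge> K0 N \<and> V1_of Q P a \<ge> 0"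
  unfolding A0_def K0_def by auto

lemma sq_ge: "a\<^sup>2 - 2 * a * c \<ge> - c\<^sup>2" for a c :: real
  using zero_le_power2[of "a - c"] by (simp add: power2_eq_square algebra_simps)

lemma upward:
  assumes N: "N > 0" and a': "a' \<in> A0 Q N P'" and PP: "P' \<le> P"
  shows "A0 Q N P \<noteq> {}"
proof -
  define v' where "v' = V1_of Q P' a'"
  define s2 where "s2 = v' + N"
  define c where "c = cc Q"
  have a'0: "a' \<ge> 0" and hv: "hY N v' a' \<ge> K0 N" and v'0: "v' \<ge> 0"
    using a' unfolding A0_iff v'_def by auto
  have s20: "s2 > 0" using v'0 N by (simp add: s2_def)
  define f where "f t = (t\<^sup>2 * s2 - N) + Q + (t * a')\<^sup>2 - 2 * (t * a') * c" for t
  have f1: "f 1 = P'" unfolding f_def s2_def v'_def V1_of_def c_def cc_def by simp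
  define T where "T = 1 + (\<bar>P\<bar> + N + c\<^sup>2 + \<bar>Q\<bar>) / s2"
  have T1: "T \<ge> 1" unfolding T_def using s20 N by (simp add: add_nonneg_nonneg)
  have "T * s2 = s2 + (\<bar>P\<bar> + N + c\<^sup>2 + \<bar>Q\<bar>)" unfolding T_def using s20 by (simp add: field_simps)
  moreover have "T\<^sup>2 * s2 \<ge> T * s2" using T1 s20
    by (simp add: power2_eq_square mult_right_mono)
  moreover have "(T * a')\<^sup>2 - 2 * (T * a') * c \<ge> - c\<^sup>2" by (rule sq_ge)
  ultimately have fT: "f T \<ge> P" unfolding f_def using s20 by linarith
  have "\<exists>t. 1 \<le> t \<and> t \<le> T \<and> f t = P"
    by (rule IVT) (use f1 PP fT T1 in \<open>auto simp: f_def intro!: continuous_intros\<close>)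
  then obtain t where t1: "1 \<le> t" and ft: "f t = P" by auto
  define a where "a = t * a'"
  have V: "V1_of Q P a = t\<^sup>2 * s2 - N"
    using ft unfolding V1_of_def f_def a_def c_def cc_def by simp
  have t2: "t\<^sup>2 \<ge> 1" using t1 by (simp add: one_le_power)
  have "t\<^sup>2 * s2 \<ge> s2" using t2 s20 by (simp add: mult_right_mono[of 1 "t\<^sup>2" s2, simplified])
  then have V0: "V1_of Q P a \<ge> 0" unfolding V s2_def using v'0 by linarith
  have sq: "sqrt (t\<^sup>2 * s2) = t * sqrt s2" using t1 by (simp add: real_sqrt_mult)
  have "hY N (V1_of Q P a) a = log 2 (t * sqrt s2) - Hn (a' / sqrt s2) / ln 2"
    using hY_scale[of "V1_of Q P a" N a] s20 t1 unfolding V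
    by (simp add: sq a_def)
  also have "\<dots> = log 2 t + (log 2 (sqrt s2) - Hn (a' / sqrt s2) / ln 2)"
    using t1 s20 by (simp add: log_mult)
  also have "\<dots> = log 2 t + hY N v' a'"
    using hY_scale[of v' N a'] s20 unfolding s2_def by simp
  moreover have "log 2 t \<ge> 0" using t1 by simp
  ultimately have "hY N (V1_of Q P a) a \<ge> K0 N"
    using hv by linarith
  moreover have "a \<ge> 0" using a'0 t1 by (simp add: a_def)
  ultimately have "a \<in> A0 Q N P" using V0 unfolding A0_iff by simp
  then show ?thesis by blast
qed

lemma S_nonempty:
  assumes N: "N > 0"
  shows "\<exists>P. A0 Q N P \<noteq> {}"
proof -
  define R where "R = max 0 (K0 N + Hn 0 / ln 2)"
  define v where "v = (2 powr R)\<^sup>2"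
  have v0: "v \<ge> 0" by (simp add: v_def)
  have "sqrt v = 2 powr R" by (simp add: v_def)
  moreover have "sqrt v \<le> sqrt (v + N)" using N by (intro real_sqrt_le_mono) simp
  ultimately have sR: "sqrt (v + N) \<ge> 2 powr R" by simp
  have "log 2 (2 powr R) \<le> log 2 (sqrt (v + N))"
    using sR v0 N by (subst log_le_cancel_iff) auto
  then have "log 2 (sqrt (v + N)) \<ge> R" by simp
  then have h: "hY N v 0 \<ge> K0 N"
    using hY_scale[of v N 0] v0 N unfolding R_def by simp
  have "0 \<in> A0 Q N (pw Q v 0)" unfolding A0_iff V1_of_pw using h v0 by simp
  then show ?thesis by blast
qed



lemma continuous_on_Hn[continuous_intros]:
  "continuous_on S g \<Longrightarrow> continuous_on S (\<lambda>x. Hn (g x))"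
  using continuous_on_compose2[of UNIV Hn S g] continuous_at_imp_continuous_on[of UNIV Hn] Hn_cont
  by auto

lemma min_attained:
  assumes N: "N > 0"
  shows "\<exists>P0. A0 Q N P0 \<noteq> {} \<and> (\<forall>P. A0 Q N P \<noteq> {} \<longrightarrow> P0 \<le> P)"
proof -
  obtain P1 where P1: "A0 Q N P1 \<noteq> {}" using S_nonempty[OF N] by blast
  then obtain a1 where a1: "a1 \<in> A0 Q N P1" by blast
  define c where "c = cc Q"
  define pp where "pp p = pw Q (fst p) (snd p)" for p :: "real \<times> real"
  define Phi where "Phi p = log 2 (sqrt (fst p + N)) - Hn (snd p / sqrt (fst p + N)) / ln 2" for p :: "real \<times> real"
  define D where "D = {p :: real \<times> real. 0 \<le> fst p \<and> 0 \<le> snd p \<and> pp p \<le> P1}"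
  define K where "K = {p \<in> D. hY N (fst p) (snd p) \<ge> K0 N}"
  have ppc: "continuous_on S pp" for S
    unfolding pp_def pw_def by (intro continuous_intros)
  have Dc: "closed D"
    unfolding D_def
    by (intro closed_Collect_conj closed_Collect_le continuous_intros ppc)
  have posD: "0 < fst p + N" if "p \<in> D" for p
    using that N unfolding D_def by simp
  have sq0: "\<forall>p\<in>D. sqrt (fst p + N) \<noteq> 0" using posD by force
  have sqp: "\<forall>p\<in>D. 0 < sqrt (fst p + N)" using posD by force
  have PhiC: "continuous_on D Phi"
    unfolding Phi_def
    by (intro continuous_intros ballI) (use sq0 sqp in auto)
  have hPhi: "hY N (fst p) (snd p) = Phi p" if "p \<in> D" for p
    unfolding Phi_def by (rule hY_scale[OF posD[OF that]])
  have KD: "K = D \<inter> Phi -` {K0 N..}"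
    unfolding K_def using hPhi by auto
  have Kc: "closed K" unfolding KD using PhiC Dc by (intro continuous_closed_preimage) auto
  define B where "B = P1 - Q + c\<^sup>2"
  have Kb: "bounded K"
  proof (rule bounded_subset)
    show "bounded ({0..B} \<times> {0..2 * \<bar>c\<bar> + \<bar>P1 - Q\<bar> + 1})"
      by (intro bounded_Times bounded_closed_interval)
    show "K \<subseteq> {0..B} \<times> {0..2 * \<bar>c\<bar> + \<bar>P1 - Q\<bar> + 1}"
    proof
      fix p assume "p \<in> K"
      then obtain v a where p: "p = (v, a)" and v0: "0 \<le> v" and a0: "0 \<le> a"
        and le: "v + Q + a\<^sup>2 - 2 * a * c \<le> P1"
        unfolding K_def D_def pp_def pw_def c_def by (cases p) auto
      have "a\<^sup>2 - 2 * a * c \<ge> - c\<^sup>2" by (rule sq_ge)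
      then have vB: "v \<le> B" using le unfolding B_def by linarith
      have "a \<le> 2 * \<bar>c\<bar> + \<bar>P1 - Q\<bar> + 1"
      proof (rule ccontr)
        assume "\<not> ?thesis"
        then have h0: "a > 2 * \<bar>c\<bar> + \<bar>P1 - Q\<bar> + 1" by simp
        then have h: "a - 2 * c \<ge> \<bar>P1 - Q\<bar> + 1" by (smt (verit) abs_ge_self)
        have "a \<ge> 1" using h0 by (smt (verit) abs_ge_zero)
        then have "a * (a - 2 * c) \<ge> 1 * (\<bar>P1 - Q\<bar> + 1)"
          using h by (intro mult_mono) auto
        then have "a\<^sup>2 - 2 * a * c > P1 - Q"
          by (simp add: power2_eq_square algebra_simps)
        then show False using le v0 by linarith
      qed
      then show "p \<in> {0..B} \<times> {0..2 * \<bar>c\<bar> + \<bar>P1 - Q\<bar> + 1}" using p v0 a0 vB by auto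
    qed
  qed
  have Kcomp: "compact K" using Kb Kc by (simp add: compact_eq_bounded_closed)
  have memK: "(V1_of Q P a, a) \<in> K" if "a \<in> A0 Q N P" "P \<le> P1" for P a
    using that unfolding K_def D_def pp_def A0_iff by (simp add: pw_V1_of)
  have Kne: "K \<noteq> {}" using memK[OF a1] by auto
  obtain p0 where p0K: "p0 \<in> K" and p0min: "\<And>p. p \<in> K \<Longrightarrow> pp p0 \<le> pp p"
    using continuous_attains_inf[OF Kcomp Kne ppc] by blast
  have inA: "snd p0 \<in> A0 Q N (pp p0)"
    using p0K unfolding K_def D_def A0_iff pp_def by (simp add: V1_of_pw)
  have ppP1: "pp p0 \<le> P1" using p0K unfolding K_def D_def by auto
  show ?thesis
  proof (intro exI conjI allI impI)
    show "A0 Q N (pp p0) \<noteq> {}" using inA by blast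
    fix P assume "A0 Q N P \<noteq> {}"
    then obtain a where a: "a \<in> A0 Q N P" by blast
    show "pp p0 \<le> P"
    proof (cases "P \<le> P1")
      case True
      from p0min[OF memK[OF a True]] show ?thesis by (simp add: pp_def pw_V1_of)
    next
      case False then show ?thesis using ppP1 by simp
    qed
  qed
qed

lemma A0_nonempty:
  assumes N: "N > 0" and P: "P \<ge> P_star Q N"
  shows "A0 Q N P \<noteq> {}"
proof -
  obtain P0 where P0: "A0 Q N P0 \<noteq> {}" and mn: "\<And>P. A0 Q N P \<noteq> {} \<Longrightarrow> P0 \<le> P"
    using min_attained[OF N] by blast
  have "P_star Q N = P0" unfolding P_star_def
    by (rule cInf_eq_minimum) (use P0 mn in auto)
  then have "P0 \<le> P" using P by simp
  from P0 obtain a where "a \<in> A0 Q N P0" by blast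
  from upward[OF N this \<open>P0 \<le> P\<close>] show ?thesis .
qed

theorem theorem3:
  fixes Q N P :: real
  assumes "Q > 0" and "N > 0" and "P \<ge> 0" and "P \<ge> P_star Q N"
  shows "S_ZEC Q N P = 0"
  unfolding S_ZEC_def est_cost_zero using A0_nonempty[OF assms(2,4)] by simp

end
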